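(* There is an absolute constant $C>0$ such that the following holds. Let $d$ and $n$ be integers with $1\le d\le n$, let $E$ be a nonempty family of subsets of $[n]$ each of size at most $d$, and let $p$ be an integer with $1\le p\le \min\{|e'\setminus e| : e,e'\in E,\ e\neq e'\}$. Then there exists a non-adaptive group testing algorithm that finds the defective hyperedge in $E$ and uses at most $C\,\frac{d}{p}\log|E|$ tests; that is, there are pools $T_1,\dots,T_t\subseteq[n]$ with $t\le C\frac dp\log|E|$ such that $r(e)\neq r(e')$ for all distinct $e,e'\in E$.
   Context: Group testing on a hypergraph: the items are $[n]=\{1,\dots,n\}$, $E$ is a family of subsets of $[n]$ (hyperedges), and exactly one hyperedge $e^*\in E$ is defective (unknown). A test on a pool $T\subseteq[n]$ is positive iff $T\cap e^*\neq\emptyset$. A non-adaptive algorithm with $t$ tests is a sequence of pools $T_1,\dots,T_t\subseteq[n]$ fixed in advance; for $f\in E$ its response vector is $r(f)\in\{0,1\}^t$ with $i$-th entry $1$ iff $T_i\cap f\neq\emptyset$. The algorithm finds the defective hyperedge iff distinct hyperedges have distinct response vectors. Logarithms are to a fixed base. *)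

theory Defs
  imports Complex_Main
begin

text \<open>A non-adaptive algorithm is a list of pools T_1..T_t. The response vector of
  a hyperedge f: the i-th entry is True iff T_i meets f.\<close>
definition response :: "nat set list \<Rightarrow> nat set \<Rightarrow> bool list" where
  "response Ts f = map (\<lambda>T. T \<inter> f \<noteq> {}) Ts"

end

theory Submission
  imports Defs
begin

definition wt :: "nat set \<Rightarrow> real \<Rightarrow> nat set \<Rightarrow> real" where
  "wt S q T = q ^ card T * (1 - q) ^ card (S - T)"

lemma wt_avoid:
  assumes S: "finite S" and A: "A \<subseteq> S"
  shows "(\<Sum>T\<in>Pow S. if T \<inter> A = {} then wt S q T else 0) = (1 - q) ^ card A"
proof -
  have h1: "(\<Prod>x\<in>S. (if x \<in> A then 0 else q) + (1 - q)) =
     (\<Sum>X\<in>Pow S. (\<Prod>x\<in>X. if x \<in> A then 0 else q) * (\<Prod>x\<in>S-X. 1 - q))"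
    by (rule prod_add[OF S])
  have h2: "(\<Prod>x\<in>S. (if x \<in> A then 0 else q) + (1 - q)) = (1 - q) ^ card A"
  proof -
    have "(\<Prod>x\<in>S. (if x \<in> A then 0 else q) + (1 - q)) = (\<Prod>x\<in>S. if x \<in> A then 1 - q else 1)"
      by (rule prod.cong) auto
    also have "\<dots> = (1 - q) ^ card (S \<inter> A)"
      using S by (simp add: prod.If_cases)
    finally show ?thesis using A by (simp add: Int_absorb1)
  qed
  have h3: "(\<Prod>x\<in>X. if x \<in> A then 0 else q) * (\<Prod>x\<in>S-X. 1 - q) = (if X \<inter> A = {} then wt S q X else 0)"
    if "X \<in> Pow S" for X
  proof -
    have fX: "finite X" using that S finite_subset by auto
    show ?thesis
    proof (cases "X \<inter> A = {}")
      case True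
      then have "(\<Prod>x\<in>X. if x \<in> A then 0 else q) = q ^ card X"
        by (simp add: prod.cong[of X X _ "\<lambda>_. q"] disjoint_iff)
      then show ?thesis using True by (simp add: wt_def)
    next
      case False
      then obtain y where "y \<in> X" "y \<in> A" by auto
      then have "(\<Prod>x\<in>X. if x \<in> A then 0 else q) = 0"
        using fX by (auto intro: prod_zero)
      then show ?thesis using False by simp
    qed
  qed
  have "(\<Sum>X\<in>Pow S. (\<Prod>x\<in>X. if x \<in> A then 0 else q) * (\<Prod>x\<in>S-X. 1 - q))
     = (\<Sum>T\<in>Pow S. if T \<inter> A = {} then wt S q T else 0)"
    by (rule sum.cong[OF refl h3])
  then show ?thesis using h1 h2 by simp
qed
definition sep :: "nat set \<Rightarrow> nat set \<times> nat set \<Rightarrow> bool" where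
  "sep T x = (T \<inter> fst x = {} \<and> T \<inter> snd x \<noteq> {})"

lemma sep_weight:
  assumes S: "finite S" and e: "e \<subseteq> S" and e': "e' \<subseteq> S"
  shows "(\<Sum>T\<in>Pow S. if sep T (e, e') then wt S q T else 0)
         = (1 - q) ^ card e - (1 - q) ^ (card e + card (e' - e))"
proof -
  have "(\<Sum>T\<in>Pow S. if sep T (e, e') then wt S q T else 0)
      = (\<Sum>T\<in>Pow S. (if T \<inter> e = {} then wt S q T else 0) - (if T \<inter> (e \<union> e') = {} then wt S q T else 0))"
    by (rule sum.cong) (auto simp: sep_def)
  also have "\<dots> = (1 - q) ^ card e - (1 - q) ^ card (e \<union> e')"
    by (simp add: sum_subtractf wt_avoid[OF S e] wt_avoid[OF S] e e')
  also have "card (e \<union> e') = card e + card (e' - e)"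
  proof -
    have "e \<union> e' = e \<union> (e' - e)" by auto
    moreover have "finite e" using S e finite_subset by auto
    moreover have "finite (e' - e)" using S e' by (meson Diff_subset finite_subset subset_trans)
    ultimately show ?thesis using card_Un_disjoint[of e "e' - e"] by (metis Diff_disjoint)
  qed
  finally show ?thesis .
qed

lemma num_bound:
  fixes d p a k :: nat
  assumes d: "1 \<le> d" and p: "1 \<le> p" "p \<le> d" and a: "a \<le> d" and k: "p \<le> k"
  defines "q \<equiv> 1 / (2 * real d)"
  shows "real p / (8 * real d) \<le> (1 - q) ^ a - (1 - q) ^ (a + k)"
proof -
  have q0: "0 < q" "q \<le> 1/2" using d by (auto simp: q_def field_simps)
  have "1 + real a * (- q) \<le> (1 + (- q)) ^ a"
    by (rule Bernoulli_inequality) (use q0 in auto)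
  moreover have "real a * q \<le> 1/2" using a d by (auto simp: q_def field_simps)
  ultimately have A: "1/2 \<le> (1 - q) ^ a" by simp
  have B1: "1 + real p * q \<le> (1 + q) ^ p"
    by (rule Bernoulli_inequality) (use q0 in auto)
  have "(1 - q) ^ p * (1 + q) ^ p = (1 - q^2) ^ p"
    by (simp add: power_mult_distrib[symmetric] power2_eq_square algebra_simps)
  also have "\<dots> \<le> 1" using q0 by (intro power_le_one) (auto simp: power2_eq_square mult_le_one)
  finally have B2: "(1 - q) ^ p * (1 + q) ^ p \<le> 1" .
  have "(1 - q) ^ p * (1 + real p * q) \<le> (1 - q) ^ p * (1 + q) ^ p"
    using B1 q0 by (intro mult_left_mono) auto
  with B2 have B3: "(1 - q) ^ p * (1 + real p * q) \<le> 1" by linarith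
  have "(1 - q) ^ k \<le> (1 - q) ^ p"
    using q0 k by (intro power_decreasing) auto
  have pq: "real p * q \<le> 1/2" using p d by (auto simp: q_def field_simps)
  have pq0: "0 < real p * q" using p q0 by auto
  have C: "real p * q / 2 \<le> 1 - (1 - q) ^ k"
  proof -
    have "(1 - q) ^ p \<le> 1 / (1 + real p * q)" using B3 pq0 by (simp add: field_simps)
    then have "1 - 1 / (1 + real p * q) \<le> 1 - (1 - q) ^ k"
      using \<open>(1 - q) ^ k \<le> (1 - q) ^ p\<close> by linarith
    moreover have "x / 2 \<le> 1 - 1 / (1 + x)" if "0 < x" "x \<le> 1/2" for x :: real
    proof -
      have "x / 2 * (1 + x) \<le> x" using that 
      proof -
        have "x * x \<le> x * 1" using that by (intro mult_left_mono) auto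
        then show ?thesis by (simp add: algebra_simps)
      qed
      then show ?thesis using that by (simp add: field_simps)
    qed
    then have "real p * q / 2 \<le> 1 - 1 / (1 + real p * q)" using pq pq0 by blast
    ultimately show ?thesis by linarith
  qed
  have "(1 - q) ^ a - (1 - q) ^ (a + k) = (1 - q) ^ a * (1 - (1 - q) ^ k)"
    by (simp add: power_add algebra_simps)
  also have "\<dots> \<ge> 1/2 * (real p * q / 2)"
    using A C pq0 by (intro mult_mono) auto
  finally show ?thesis using d by (simp add: q_def field_simps)
qed
lemma wt_nonneg: "0 \<le> q \<Longrightarrow> q \<le> 1 \<Longrightarrow> 0 \<le> wt S q T"
  by (simp add: wt_def)

lemma step:
  fixes d p :: nat
  assumes S: "finite S" and P: "finite P"
    and Pc: "\<And>x. x \<in> P \<Longrightarrow> fst x \<subseteq> S \<and> snd x \<subseteq> S \<and> card (fst x) \<le> d \<and> p \<le> card (snd x - fst x)"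
    and d: "1 \<le> d" and p: "1 \<le> p" "p \<le> d"
  shows "\<exists>T. T \<subseteq> S \<and> real p / (8 * real d) * real (card P) \<le> real (card {x\<in>P. sep T x})"
proof -
  define q where "q = 1 / (2 * real d)"
  have q0: "0 \<le> q" "q \<le> 1" using d by (auto simp: q_def field_simps)
  define g where "g T = real (card {x\<in>P. sep T x})" for T
  have g: "g T = (\<Sum>x\<in>P. if sep T x then 1 else 0)" for T
    using P by (simp add: g_def sum.If_cases Int_def conj_commute)
  have fin: "finite (Pow S)" using S by simp
  obtain Tm where Tm: "Tm \<in> Pow S" "\<And>T. T \<in> Pow S \<Longrightarrow> g T \<le> g Tm"
  proof -
    have ne: "g ` Pow S \<noteq> {}" by auto
    obtain Tm where "Tm \<in> Pow S" "g Tm = Max (g ` Pow S)"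
      using Max_in[OF finite_imageI[OF fin] ne] by auto
    moreover have "g T \<le> Max (g ` Pow S)" if "T \<in> Pow S" for T
      using fin that by (intro Max_ge) auto
    ultimately show ?thesis using that by auto
  qed
  have tot: "(\<Sum>T\<in>Pow S. wt S q T) = 1"
    using wt_avoid[OF S, of "{}" q] by simp
  have "(\<Sum>T\<in>Pow S. wt S q T * g T) = (\<Sum>x\<in>P. \<Sum>T\<in>Pow S. if sep T x then wt S q T else 0)"
    by (simp add: g sum_distrib_left sum.swap[of _ "Pow S" P] if_distrib cong: if_cong)
  also have "\<dots> \<ge> (\<Sum>x\<in>P. real p / (8 * real d))"
  proof (rule sum_mono)
    fix x assume x: "x \<in> P"
    obtain e e' where ee: "x = (e, e')" by (cases x)
    have c: "e \<subseteq> S" "e' \<subseteq> S" "card e \<le> d" "p \<le> card (e' - e)" using Pc[OF x] ee by auto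
    show "real p / (8 * real d) \<le> (\<Sum>T\<in>Pow S. if sep T x then wt S q T else 0)"
      unfolding ee sep_weight[OF S c(1,2)] q_def using num_bound[OF d p c(3,4)] by simp
  qed
  finally have lo: "real p / (8 * real d) * real (card P) \<le> (\<Sum>T\<in>Pow S. wt S q T * g T)"
    by (simp add: mult.commute)
  have "(\<Sum>T\<in>Pow S. wt S q T * g T) \<le> (\<Sum>T\<in>Pow S. wt S q T * g Tm)"
    by (rule sum_mono) (use Tm wt_nonneg[OF q0] in \<open>auto intro: mult_left_mono\<close>)
  also have "\<dots> = g Tm" using tot by (simp add: sum_distrib_right[symmetric])
  finally have "real p / (8 * real d) * real (card P) \<le> g Tm" using lo by linarith
  then show ?thesis using Tm(1) unfolding g_def by blast
qed

definition unres :: "(nat set \<times> nat set) set \<Rightarrow> nat set list \<Rightarrow> (nat set \<times> nat set) set" where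
  "unres P Ts = {x\<in>P. \<forall>T\<in>set Ts. \<not> sep T x}"

lemma iterate:
  fixes d p :: nat
  assumes S: "finite S" and P: "finite P"
    and Pc: "\<And>x. x \<in> P \<Longrightarrow> fst x \<subseteq> S \<and> snd x \<subseteq> S \<and> card (fst x) \<le> d \<and> p \<le> card (snd x - fst x)"
    and d: "1 \<le> d" and p: "1 \<le> p" "p \<le> d"
  shows "\<exists>Ts. length Ts = t \<and> (\<forall>T\<in>set Ts. T \<subseteq> S) \<and>
     real (card (unres P Ts)) \<le> (1 - real p / (8 * real d)) ^ t * real (card P)"
proof (induction t)
  case 0
  show ?case by (rule exI[of _ "[]"]) (simp add: unres_def)
next
  case (Suc t)
  then obtain Ts where Ts: "length Ts = t" "\<forall>T\<in>set Ts. T \<subseteq> S"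
     "real (card (unres P Ts)) \<le> (1 - real p / (8 * real d)) ^ t * real (card P)" by blast
  define c where "c = real p / (8 * real d)"
  have c1: "c \<le> 1" using p d by (simp add: c_def field_simps)
  have P': "finite (unres P Ts)" using P by (simp add: unres_def)
  obtain T where T: "T \<subseteq> S" "c * real (card (unres P Ts)) \<le> real (card {x\<in>unres P Ts. sep T x})"
    using step[OF S P' _ d p] Pc unfolding c_def unres_def by auto
  have eq: "unres P (T # Ts) = unres P Ts - {x\<in>unres P Ts. sep T x}"
    by (auto simp: unres_def)
  have "real (card (unres P (T # Ts))) = real (card (unres P Ts)) - real (card {x\<in>unres P Ts. sep T x})"
    unfolding eq using P' by (subst card_Diff_subset) (auto simp: of_nat_diff card_mono)
  also have "\<dots> \<le> (1 - c) * real (card (unres P Ts))" using T(2) by (simp add: algebra_simps)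
  also have "\<dots> \<le> (1 - c) * ((1 - c) ^ t * real (card P))"
    using Ts(3) c1 by (intro mult_left_mono) (auto simp: c_def)
  finally show ?case using Ts T(1)
    by (intro exI[of _ "T # Ts"]) (auto simp: c_def)
qed
lemma main:
  fixes d n p :: nat and E :: "nat set set"
  assumes d: "1 \<le> d" and E: "E \<noteq> {}" and Es: "\<forall>e\<in>E. e \<subseteq> {1..n} \<and> card e \<le> d"
    and p: "1 \<le> p" and sepp: "\<forall>e\<in>E. \<forall>e'\<in>E. e \<noteq> e' \<longrightarrow> p \<le> card (e' - e)"
  shows "\<exists>Ts::nat set list. (\<forall>T\<in>set Ts. T \<subseteq> {1..n}) \<and>
             real (length Ts) \<le> 18 * (real d / real p) * log 2 (real (card E)) \<and>
             (\<forall>e\<in>E. \<forall>e'\<in>E. e \<noteq> e' \<longrightarrow> response Ts e \<noteq> response Ts e')"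
proof -
  define S where "S = {1..n}"
  have S: "finite S" by (simp add: S_def)
  have finE: "finite E"
    by (rule finite_subset[of E "Pow S"]) (use Es S in \<open>auto simp: S_def\<close>)
  define N where "N = card E"
  have N1: "1 \<le> N" using finE E by (simp add: N_def Suc_le_eq card_gt_0_iff)
  show ?thesis
  proof (cases "N = 1")
    case True
    then obtain e where "E = {e}" by (auto simp: N_def card_Suc_eq)
    then show ?thesis by (intro exI[of _ "[]"]) (simp add: N_def)
  next
    case False
    then have N2: "2 \<le> N" using N1 by simp
    obtain e where e0: "e \<in> E" using E by auto
    have "E - {e} \<noteq> {}"
    proof
      assume "E - {e} = {}"
      then have "E = {e}" using e0 by auto
      then show False using N2 by (simp add: N_def)
    qed
    then obtain e' where "e' \<in> E - {e}" by auto
    then have ee: "e \<in> E" "e' \<in> E" "e \<noteq> e'" using e0 by auto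
    have "p \<le> card (e' - e)" using sepp ee by auto
    also have "\<dots> \<le> card e'"
    proof (rule card_mono)
      show "finite e'" using Es ee by (meson finite_atLeastAtMost finite_subset)
    qed auto
    also have "\<dots> \<le> d" using Es ee by auto
    finally have pd: "p \<le> d" .
    define P where "P = {x. fst x \<in> E \<and> snd x \<in> E \<and> fst x \<noteq> snd x}"
    have PE: "P \<subseteq> E \<times> E" by (auto simp: P_def)
    have finP: "finite P" using PE finE finite_subset by blast
    have cardP: "card P \<le> N * N"
      using card_mono[OF _ PE] finE by (simp add: N_def card_cartesian_product)
    have Pc: "\<And>x. x \<in> P \<Longrightarrow> fst x \<subseteq> S \<and> snd x \<subseteq> S \<and> card (fst x) \<le> d \<and> p \<le> card (snd x - fst x)"
      using Es sepp by (auto simp: P_def S_def)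
    define c where "c = real p / (8 * real d)"
    have c0: "0 < c" "c \<le> 1" using p d pd by (auto simp: c_def field_simps)
    define t where "t = nat \<lceil>2 * ln (real N) / c\<rceil> + 1"
    obtain Ts where Ts: "length Ts = t" "\<forall>T\<in>set Ts. T \<subseteq> S"
      "real (card (unres P Ts)) \<le> (1 - c) ^ t * real (card P)"
      using iterate[OF S finP Pc d p pd, of t] unfolding c_def by blast
    have lnN: "0 < ln (real N)" using N2 by simp
    have tlo: "2 * ln (real N) / c < real t"
    proof -
      have "2 * ln (real N) / c \<le> real (nat \<lceil>2 * ln (real N) / c\<rceil>)" by (rule real_nat_ceiling_ge)
      then show ?thesis unfolding t_def by simp
    qed
    have tup: "real t \<le> 2 * ln (real N) / c + 2"
    proof -
      have nn: "0 \<le> 2 * ln (real N) / c" using lnN c0 by simp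
      then have "real (nat \<lceil>2 * ln (real N) / c\<rceil>) = real_of_int \<lceil>2 * ln (real N) / c\<rceil>"
        by (simp add: of_nat_nat)
      moreover have "real_of_int \<lceil>2 * ln (real N) / c\<rceil> \<le> 2 * ln (real N) / c + 1"
        by (rule of_int_ceiling_le_add_one)
      moreover have "real t = real (nat \<lceil>2 * ln (real N) / c\<rceil>) + 1" by (simp add: t_def)
      ultimately show ?thesis by linarith
    qed
    have "(1 - c) ^ t \<le> exp (- c) ^ t"
      using c0 by (intro power_mono) (auto simp: exp_ge_add_one_self[of "-c", simplified] )
    also have "\<dots> = exp (- c * real t)" by (simp add: exp_of_nat_mult[symmetric] mult.commute)
    also have "\<dots> < exp (- 2 * ln (real N))"
    proof -
      have "2 * ln (real N) < c * real t" using tlo c0 by (simp add: pos_divide_less_eq mult.commute)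
      then show ?thesis by simp
    qed
    also have "\<dots> = 1 / (real N * real N)"
    proof -
      have "exp (2 * ln (real N)) = exp (ln (real N)) * exp (ln (real N))"
        by (simp flip: exp_add)
      also have "\<dots> = real N * real N" using N2 by simp
      finally show ?thesis by (simp add: exp_minus divide_inverse)
    qed
    finally have "(1 - c) ^ t < 1 / (real N * real N)" .
    moreover have "real (card P) \<le> real N * real N" using cardP by (metis of_nat_le_iff of_nat_mult)
    ultimately have "(1 - c) ^ t * real (card P) < 1"
    proof -
      have "(1 - c) ^ t * real (card P) \<le> (1 - c) ^ t * (real N * real N)"
        using \<open>real (card P) \<le> real N * real N\<close> c0 by (intro mult_left_mono) auto
      also have "\<dots> < 1 / (real N * real N) * (real N * real N)"
        using \<open>(1 - c) ^ t < 1 / (real N * real N)\<close> N2 by (intro mult_strict_right_mono) auto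
      also have "\<dots> = 1" using N2 by simp
      finally show ?thesis .
    qed
    then have "card (unres P Ts) = 0" using Ts(3) by linarith
    then have U: "unres P Ts = {}" using finP by (simp add: unres_def)
    have resp: "response Ts e \<noteq> response Ts e'" if "e \<in> E" "e' \<in> E" "e \<noteq> e'" for e e'
    proof
      assume eq: "response Ts e = response Ts e'"
      have "(e, e') \<in> P" using that by (simp add: P_def)
      then obtain T where "T \<in> set Ts" "sep T (e, e')" using U by (auto simp: unres_def)
      moreover have "\<forall>T\<in>set Ts. (T \<inter> e \<noteq> {}) = (T \<inter> e' \<noteq> {})"
        using eq by (simp add: response_def map_eq_conv)
      ultimately show False by (auto simp: sep_def)
    qed
    have L: "ln (real N) \<le> log 2 (real N)" and L1: "1 \<le> log 2 (real N)"
    proof -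
      have "ln 2 \<le> (1::real)" using ln_2_less_1 by simp
      then show "ln (real N) \<le> log 2 (real N)" using lnN by (simp add: log_def field_simps)
      show "1 \<le> log 2 (real N)" using N2 by simp
    qed
    have dp: "1 \<le> real d / real p" using pd p by simp
    have "real t \<le> 16 * (real d / real p) * ln (real N) + 2"
      using tup c0 p d by (simp add: c_def field_simps)
    also have "\<dots> \<le> 16 * (real d / real p) * log 2 (real N) + 2 * (real d / real p) * log 2 (real N)"
    proof -
      have "16 * (real d / real p) * ln (real N) \<le> 16 * (real d / real p) * log 2 (real N)"
        using L dp by (intro mult_left_mono) auto
      moreover have "2 \<le> 2 * (real d / real p) * log 2 (real N)"
      proof -
        have "1 * 1 \<le> (real d / real p) * log 2 (real N)" using dp L1 by (intro mult_mono) auto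
        then show ?thesis by simp
      qed
      ultimately show ?thesis by linarith
    qed
    finally have "real t \<le> 18 * (real d / real p) * log 2 (real N)" by simp
    then show ?thesis using Ts resp by (intro exI[of _ Ts]) (auto simp: S_def N_def)
  qed
qed

theorem corollary1:
  "\<exists>C::real. C > 0 \<and>
    (\<forall>(d::nat) (n::nat) (E::nat set set) (p::nat).
      1 \<le> d \<and> d \<le> n \<and> E \<noteq> {} \<and> (\<forall>e\<in>E. e \<subseteq> {1..n} \<and> card e \<le> d) \<and>
      1 \<le> p \<and> (\<forall>e\<in>E. \<forall>e'\<in>E. e \<noteq> e' \<longrightarrow> p \<le> card (e' - e))
      \<longrightarrow> (\<exists>Ts::nat set list. (\<forall>T\<in>set Ts. T \<subseteq> {1..n}) \<and>
             real (length Ts) \<le> C * (real d / real p) * log 2 (real (card E)) \<and>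
             (\<forall>e\<in>E. \<forall>e'\<in>E. e \<noteq> e' \<longrightarrow> response Ts e \<noteq> response Ts e')))"
proof (intro exI[of _ 18] conjI allI impI)
  fix d n p :: nat and E :: "nat set set"
  assume h: "1 \<le> d \<and> d \<le> n \<and> E \<noteq> {} \<and> (\<forall>e\<in>E. e \<subseteq> {1..n} \<and> card e \<le> d) \<and>
      1 \<le> p \<and> (\<forall>e\<in>E. \<forall>e'\<in>E. e \<noteq> e' \<longrightarrow> p \<le> card (e' - e))"
  show "\<exists>Ts::nat set list. (\<forall>T\<in>set Ts. T \<subseteq> {1..n}) \<and>
             real (length Ts) \<le> 18 * (real d / real p) * log 2 (real (card E)) \<and>
             (\<forall>e\<in>E. \<forall>e'\<in>E. e \<noteq> e' \<longrightarrow> response Ts e \<noteq> response Ts e')"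
    using h by (intro main) auto
qed simp

end
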